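(* Let $B\in\mathbb{R}^{n\times n}$ be a nonsingular $M$-matrix and $C\in\mathbb{R}^{n\times n}$ an $M$-matrix such that $B^{-1}C\ge 0$, and suppose that $B-C-I$ is a nonsingular $M$-matrix. Let $\Phi$ be the maximal nonpositive solvent of $X^2+BX+C=0$ and $\Psi$ the maximal nonpositive solvent of the dual equation $CY^2+BY+I=0$. Set $X_0=E_0=-B^{-1}C$ and $Y_0=F_0=-B^{-1}$, and for $i=0,1,2,\dots$ define $E_{i+1}=E_i(I-Y_iX_i)^{-1}E_i$, $F_{i+1}=F_i(I-X_iY_i)^{-1}F_i$, $X_{i+1}=X_i+F_i(I-X_iY_i)^{-1}X_iE_i$, $Y_{i+1}=Y_i+E_i(I-Y_iX_i)^{-1}Y_iF_i$. Then these sequences are well-defined (all inverses exist), and for every $k\ge 1$: (a) $E_k=(I-Y_k\Phi)\Phi^{2^k}\ge 0$; (b) $F_k=(I-X_k\Psi)\Psi^{2^k}\ge 0$; (c) $I-X_kY_k$ and $I-Y_kX_k$ are nonsingular $M$-matrices; (d) $\Phi\le X_k\le X_{k-1}\le 0$, $\Psi\le Y_k\le Y_{k-1}\le 0$, and $0\le X_k-\Phi\le \Psi^{2^k}(-\Phi)\Phi^{2^k}$, $0\le Y_k-\Psi\le \Phi^{2^k}(-\Psi)\Psi^{2^k}$.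
   Context: Inequalities between matrices are entrywise; a matrix is nonpositive if all its entries are $\le 0$. A solvent of a matrix equation is a matrix solution; the maximal nonpositive solvent is a nonpositive solvent $\Phi$ with $X\le\Phi$ entrywise for every nonpositive solvent $X$ (these exist for both equations under the stated hypotheses). A $Z$-matrix is a real square matrix with nonpositive off-diagonal entries; a $Z$-matrix $A=sI-N$ with $N\ge 0$ is an $M$-matrix if $s\ge\rho(N)$ and a nonsingular $M$-matrix if $s>\rho(N)$, where $\rho$ is the spectral radius. *)

theory Defs
  imports "HOL-Analysis.Analysis"
begin

text \<open>Square real matrices are \<open>real^'n^'n\<close>; the order \<open>\<le>\<close> on them is entrywise
(library instance on vec), \<open>0\<close> is the zero matrix, \<open>**\<close> the matrix product,
\<open>mat 1\<close> the identity.\<close>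

definition cmat :: "real^'n^'n \<Rightarrow> complex^'n^'n" where
  "cmat A = (\<chi> i j. complex_of_real (A $ i $ j))"

definition spec_rad :: "real^'n^'n \<Rightarrow> real" where
  "spec_rad A = Max {cmod l | l. \<exists>v. v \<noteq> 0 \<and> cmat A *v v = l *s v}"

text \<open>Matrix power (note: \<open>^\<close> on vec would be entrywise).\<close>
definition mpow :: "real^'n^'n \<Rightarrow> nat \<Rightarrow> real^'n^'n" where
  "mpow A k = ((\<lambda>M. A ** M) ^^ k) (mat 1)"

definition Z_matrix :: "real^'n^'n \<Rightarrow> bool" where
  "Z_matrix A \<longleftrightarrow> (\<forall>i j. i \<noteq> j \<longrightarrow> A $ i $ j \<le> 0)"

definition M_matrix :: "real^'n^'n \<Rightarrow> bool" where
  "M_matrix A \<longleftrightarrow> (\<exists>s N. 0 \<le> N \<and> A = s *\<^sub>R mat 1 - N \<and> s \<ge> spec_rad N)"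

definition nonsing_M_matrix :: "real^'n^'n \<Rightarrow> bool" where
  "nonsing_M_matrix A \<longleftrightarrow> (\<exists>s N. 0 \<le> N \<and> A = s *\<^sub>R mat 1 - N \<and> s > spec_rad N)"

definition max_nonpos_solvent :: "real^'n^'n \<Rightarrow> real^'n^'n \<Rightarrow> real^'n^'n \<Rightarrow> bool" where
  "max_nonpos_solvent B C P \<longleftrightarrow>
     P \<le> 0 \<and> P ** P + B ** P + C = 0 \<and>
     (\<forall>X. X \<le> 0 \<and> X ** X + B ** X + C = 0 \<longrightarrow> X \<le> P)"

definition max_nonpos_dual_solvent :: "real^'n^'n \<Rightarrow> real^'n^'n \<Rightarrow> real^'n^'n \<Rightarrow> bool" where
  "max_nonpos_dual_solvent B C P \<longleftrightarrow>
     P \<le> 0 \<and> C ** P ** P + B ** P + mat 1 = 0 \<and>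
     (\<forall>Y. Y \<le> 0 \<and> C ** Y ** Y + B ** Y + mat 1 = 0 \<longrightarrow> Y \<le> P)"

end

theory Submission
  imports Defs "HOL-Computational_Algebra.Polynomial" "HOL-Computational_Algebra.Fundamental_Theorem_Algebra"
begin

definition charp :: "complex^'n^'n \<Rightarrow> complex poly" where
  "charp A = (\<Sum>p\<in>{p. p permutes (UNIV::'n set)}. smult (of_int (sign p))
      (\<Prod>i\<in>UNIV. [:A$i$p i, - (if p i = i then 1 else 0):]))"

lemma poly_charp: "poly (charp A) l = det (A - mat l)"
  unfolding charp_def det_def poly_sum poly_smult poly_prod
  by (intro sum.cong refl arg_cong2[where f="(*)"] prod.cong) (auto simp: mat_def)

lemma mat_mult_vec: "(mat (l::'a::comm_ring_1) :: 'a^'n^'n) *v x = l *s x"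
proof -
  have "(\<Sum>j\<in>UNIV. (if i = j then l else 0) * x$j) = l * x$i" for i
    by (simp add: if_distrib[where f="\<lambda>a. a * _"] cong: if_cong)
  then show ?thesis by (simp add: vec_eq_iff matrix_vector_mult_def mat_def)
qed

lemma eig_iff_root:
  fixes A :: "complex^'n^'n"
  shows "(\<exists>v. v \<noteq> 0 \<and> A *v v = l *s v) \<longleftrightarrow> poly (charp A) l = 0"
proof -
  have "poly (charp A) l = 0 \<longleftrightarrow> \<not> invertible (A - mat l)"
    by (simp add: poly_charp invertible_det_nz)
  also have "\<dots> \<longleftrightarrow> \<not> (\<forall>x. (A - mat l) *v x = 0 \<longrightarrow> x = 0)"
    by (simp add: invertible_left_inverse matrix_left_invertible_ker)
  also have "\<dots> \<longleftrightarrow> (\<exists>v. v \<noteq> 0 \<and> A *v v = l *s v)"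
    by (auto simp: matrix_vector_mult_diff_rdistrib mat_mult_vec)
  finally show ?thesis by simp
qed

lemma coeff_charp: "coeff (charp (A::complex^'n^'n)) CARD('n) = (-1)^CARD('n)"
proof -
  let ?f = "\<lambda>p. smult (of_int (sign p)) (\<Prod>i\<in>(UNIV::'n set). [:A$i$p i, - (if p i = i then 1 else 0):])"
  have z: "coeff (?f p) CARD('n) = 0" if "p permutes UNIV" "p \<noteq> id" for p
  proof -
    obtain j where j: "p j \<noteq> j" using \<open>p \<noteq> id\<close> by (auto simp: fun_eq_iff)
    have "degree (\<Prod>i\<in>(UNIV::'n set). [:A$i$p i, - (if p i = i then 1 else 0):])
        \<le> (\<Sum>i\<in>(UNIV::'n set). degree [:A$i$p i, - (if p i = i then 1 else 0):])"
      using degree_prod_sum_le[OF finite_class.finite_UNIV, of "\<lambda>i. [:A$i$p i, - (if p i = i then 1 else 0):]"]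
      unfolding o_def .
    also have "\<dots> < (\<Sum>i\<in>(UNIV::'n set). 1)"
    proof (rule sum_strict_mono_ex1)
      show "\<forall>x\<in>UNIV. degree [:A $ x $ p x, - (if p x = x then 1 else 0):] \<le> 1"
        by auto
      show "\<exists>a\<in>UNIV. degree [:A $ a $ p a, - (if p a = a then 1 else 0):] < 1"
        using j by (intro bexI[of _ j]) auto
    qed simp
    also have "\<dots> = CARD('n)" by simp
    finally show ?thesis by (simp add: coeff_eq_0)
  qed
  have idp: "coeff (?f id) CARD('n) = (-1)^CARD('n)"
  proof -
    have d: "degree (\<Prod>i\<in>(UNIV::'n set). [:A$i$i, - 1:]) = CARD('n)"
      by (subst degree_prod_sum_eq) auto
    have "lead_coeff (\<Prod>i\<in>(UNIV::'n set). [:A$i$i, - 1:]) = (-1)^CARD('n)"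
      by (simp add: lead_coeff_prod)
    then show ?thesis using d by simp
  qed
  have "coeff (charp A) CARD('n) = (\<Sum>p\<in>{p. p permutes (UNIV::'n set)}. coeff (?f p) CARD('n))"
    unfolding charp_def coeff_sum ..
  also have "\<dots> = coeff (?f id) CARD('n) + (\<Sum>p\<in>{p. p permutes (UNIV::'n set)} - {id}. coeff (?f p) CARD('n))"
    by (rule sum.remove) (auto simp: permutes_id)
  also have "(\<Sum>p\<in>{p. p permutes (UNIV::'n set)} - {id}. coeff (?f p) CARD('n)) = 0"
    by (rule sum.neutral) (use z in blast)
  finally show ?thesis using idp by simp
qed

lemma charp_nz: "charp (A::complex^'n^'n) \<noteq> 0"
  using coeff_charp[of A] by auto

lemma charp_deg: "degree (charp (A::complex^'n^'n)) \<ge> CARD('n)"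
  using coeff_charp[of A] by (intro le_degree) auto

lemma eig_finite: "finite {l. \<exists>v. v \<noteq> 0 \<and> (A::complex^'n^'n) *v v = l *s v}"
  using poly_roots_finite[OF charp_nz[of A]] by (simp add: eig_iff_root)

lemma eig_nonempty: "\<exists>l v. v \<noteq> 0 \<and> (A::complex^'n^'n) *v v = l *s v"
proof -
  have "CARD('n) > 0" by simp
  then have "degree (charp A) \<noteq> 0" using charp_deg[of A] by linarith
  then have "\<not> constant (poly (charp A))"
    by (simp add: constant_degree)
  then obtain z where "poly (charp A) z = 0" using fundamental_theorem_of_algebra by blast
  then show ?thesis using eig_iff_root by blast
qed

lemma spec_set_eq: "{cmod l | l. \<exists>v. v \<noteq> 0 \<and> cmat A *v v = l *s v} =
   cmod ` {l. \<exists>v. v \<noteq> 0 \<and> cmat A *v v = l *s v}" by auto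

lemma spec_set_finite: "finite {cmod l | l. \<exists>v. v \<noteq> 0 \<and> cmat A *v v = l *s v}"
  unfolding spec_set_eq by (intro finite_imageI eig_finite)

lemma spec_set_ne: "{cmod l | l. \<exists>v. v \<noteq> 0 \<and> cmat A *v v = l *s v} \<noteq> {}"
  using eig_nonempty[of "cmat A"] by auto

lemma spec_rad_ge: "v \<noteq> 0 \<Longrightarrow> cmat A *v v = l *s v \<Longrightarrow> cmod l \<le> spec_rad A"
  unfolding spec_rad_def by (rule Max_ge[OF spec_set_finite]) auto

lemma spec_rad_nonneg: "0 \<le> spec_rad A"
proof -
  obtain l v where "v \<noteq> 0" "cmat A *v v = l *s v" using eig_nonempty[of "cmat A"] by blast
  then show ?thesis using spec_rad_ge[of v A l] norm_ge_zero[of l] by linarith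
qed

lemma spec_rad_less:
  assumes "\<And>l v. v \<noteq> 0 \<Longrightarrow> cmat A *v v = l *s v \<Longrightarrow> cmod l < s"
  shows "spec_rad A < s"
  unfolding spec_rad_def using assms
  by (subst Max_less_iff[OF spec_set_finite spec_set_ne]) auto

lemma mat_le_iff: "(A::real^'n^'m) \<le> B \<longleftrightarrow> (\<forall>i j. A$i$j \<le> B$i$j)"
  by (simp add: less_eq_vec_def)

lemma vec_le_iff: "(x::real^'n) \<le> y \<longleftrightarrow> (\<forall>i. x$i \<le> y$i)"
  by (simp add: less_eq_vec_def)

lemma mm_entry: "((A::real^'n^'m) ** (B::real^'p^'n))$i$j = (\<Sum>k\<in>UNIV. A$i$k * B$k$j)"
  by (simp add: matrix_matrix_mult_def)

lemma mv_entry: "((A::real^'n^'m) *v x)$i = (\<Sum>j\<in>UNIV. A$i$j * x$j)"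
  by (simp add: matrix_vector_mult_def)

lemma mm_nonneg: "0 \<le> (A::real^'n^'n) \<Longrightarrow> 0 \<le> B \<Longrightarrow> 0 \<le> A ** B"
  unfolding mat_le_iff mm_entry by (auto intro!: sum_nonneg)

lemma mm_mono: "0 \<le> (A::real^'n^'n) \<Longrightarrow> A \<le> A' \<Longrightarrow> 0 \<le> B \<Longrightarrow> B \<le> B' \<Longrightarrow> A ** B \<le> A' ** B'"
  unfolding mat_le_iff mm_entry by (auto intro!: sum_mono mult_mono) (meson order_trans)

lemma mm_mono_l: "0 \<le> (P::real^'n^'n) \<Longrightarrow> A \<le> A' \<Longrightarrow> P ** A \<le> P ** A'"
  unfolding mat_le_iff mm_entry by (auto intro!: sum_mono mult_left_mono)

lemma mm_mono_r: "0 \<le> (P::real^'n^'n) \<Longrightarrow> (A::real^'n^'n) \<le> A' \<Longrightarrow> A ** P \<le> A' ** P"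
  unfolding mat_le_iff mm_entry by (auto intro!: sum_mono mult_right_mono)

lemma mv_nonneg: "0 \<le> (A::real^'n^'n) \<Longrightarrow> 0 \<le> x \<Longrightarrow> 0 \<le> A *v x"
  unfolding mat_le_iff vec_le_iff mv_entry by (auto intro!: sum_nonneg)

lemma mv_mono_r: "0 \<le> (P::real^'n^'n) \<Longrightarrow> x \<le> y \<Longrightarrow> P *v x \<le> P *v y"
  unfolding mat_le_iff vec_le_iff mv_entry by (auto intro!: sum_mono mult_left_mono)

lemma mv_mono_l: "0 \<le> (x::real^'n) \<Longrightarrow> (A::real^'n^'n) \<le> A' \<Longrightarrow> A *v x \<le> A' *v x"
  unfolding mat_le_iff vec_le_iff mv_entry by (auto intro!: sum_mono mult_right_mono)

lemma mm_neg_l: "(- (A::real^'n^'n)) ** (B::real^'n^'n) = - (A ** B)"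
  by (simp add: vec_eq_iff mm_entry sum_negf)
lemma mm_neg_r: "(A::real^'n^'n) ** (- B::real^'n^'n) = - (A ** B)"
  by (simp add: vec_eq_iff mm_entry sum_negf)
lemma mm_add_r: "((A::real^'n^'n) + B) ** C = A ** C + B ** C"
  by (simp add: vec_eq_iff mm_entry sum.distrib distrib_right)
lemma mm_diff_r: "((A::real^'n^'n) - B) ** C = A ** C - B ** C"
  by (simp add: vec_eq_iff mm_entry sum_subtractf left_diff_distrib)
lemma mm_diff_l: "(A::real^'n^'n) ** (B - C) = A ** B - A ** C"
  by (simp add: vec_eq_iff mm_entry sum_subtractf right_diff_distrib)
lemma mv_neg_l: "(- (A::real^'n^'n)) *v (x::real^'n) = - (A *v x)"
  by (simp add: vec_eq_iff mv_entry sum_negf)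
lemma mv_neg_r: "(A::real^'n^'n) *v (- x) = - (A *v x)"
  by (simp add: vec_eq_iff mv_entry sum_negf)

lemma finite_argmax: "\<exists>i0::'n::finite. \<forall>j. f j \<le> (f i0::real)"
proof -
  have "Max (range f) \<in> range f" by (rule Max_in) auto
  then obtain i0 where "Max (range f) = f i0" by blast
  moreover have "f j \<le> Max (range f)" for j by (rule Max_ge) auto
  ultimately show ?thesis by metis
qed

lemma inv_props: "invertible A \<Longrightarrow> A ** matrix_inv A = mat 1 \<and> matrix_inv A ** A = mat 1"
  unfolding matrix_inv_def invertible_def by (rule someI_ex)

lemma scaled_id_mv: "((t *\<^sub>R mat 1 - N) *v x)$i = t * x$i - (N *v x)$i" for N :: "real^'n^'n"
proof -
  have "(t *\<^sub>R mat 1 :: real^'n^'n) = mat t" by (simp add: vec_eq_iff mat_def)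
  then have "(t *\<^sub>R mat 1 :: real^'n^'n) *v x = t *\<^sub>R x" by (simp add: mat_mult_vec scalar_mult_eq_scaleR)
  then show ?thesis by (simp add: matrix_vector_mult_diff_rdistrib)
qed

lemma min_principle:
  fixes N :: "real^'n^'n"
  assumes N: "0 \<le> N" and v: "\<forall>i. 0 < v$i" and Nv: "\<forall>i. (N *v v)$i < t * v$i"
    and Nx: "\<forall>i. (N *v x)$i \<le> t * x$i"
  shows "\<forall>i. 0 \<le> x$i"
proof (rule ccontr)
  assume "\<not> (\<forall>i. 0 \<le> x$i)"
  then obtain i where i: "x$i < 0" by (meson not_le)
  define S where "S j = - x$j / v$j" for j
  obtain i0 where i0: "\<forall>j. S j \<le> S i0" using finite_argmax by blast
  define c where "c = S i0"
  have "S i > 0" using i v[rule_format, of i] by (simp add: S_def divide_neg_pos)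
  then have c: "c > 0" using i0 c_def by (meson less_le_trans)
  have xj: "x$j \<ge> - c * v$j" for j
  proof -
    have "S j \<le> c" using i0 c_def by auto
    then have "(- x$j) / v$j \<le> c" unfolding S_def .
    then have "- x$j \<le> c * v$j" by (subst (asm) pos_divide_le_eq) (use v in auto)
    then show ?thesis by simp
  qed
  have xi0: "x$i0 = - c * v$i0" using v[rule_format, of i0] by (simp add: c_def S_def)
  have "(N *v x)$i0 = (\<Sum>j\<in>UNIV. N$i0$j * x$j)" by (simp add: mv_entry)
  also have "\<dots> \<ge> (\<Sum>j\<in>UNIV. N$i0$j * (- c * v$j))"
    using N xj by (intro sum_mono mult_left_mono) (auto simp: mat_le_iff)
  finally have "(N *v x)$i0 \<ge> - c * (N *v v)$i0"
    by (simp add: mv_entry sum_distrib_left algebra_simps)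
  moreover have "- c * (N *v v)$i0 > - c * (t * v$i0)"
    using c Nv by simp
  ultimately have "(N *v x)$i0 > t * x$i0" using xi0 by (simp add: algebra_simps)
  then show False using Nx by (meson not_le)
qed

lemma zpos_inv:
  fixes N :: "real^'n^'n"
  assumes N: "0 \<le> N" and v: "\<forall>i. 0 < v$i" and Nv: "\<forall>i. (N *v v)$i < t * v$i"
  shows "invertible (t *\<^sub>R mat 1 - N) \<and> 0 \<le> matrix_inv (t *\<^sub>R mat 1 - N)"
proof -
  let ?A = "t *\<^sub>R mat 1 - N"
  have ker: "x = 0" if "?A *v x = 0" for x
  proof -
    have "\<forall>i. (N *v x)$i \<le> t * x$i"
    proof
      fix i
      have "(?A *v x)$i = 0" using that by simp
      then show "(N *v x)$i \<le> t * x$i" using scaled_id_mv[of t N x i] by simp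
    qed
    then have "\<forall>i. 0 \<le> x$i" using min_principle[OF N v Nv] by blast
    moreover have "\<forall>i. (N *v (-x))$i \<le> t * (-x)$i" using that scaled_id_mv[of t N x]
      by (simp add: mv_neg_r)
    then have "\<forall>i. 0 \<le> (-x)$i" using min_principle[OF N v Nv] by blast
    ultimately show ?thesis by (simp add: vec_eq_iff) (meson antisym neg_le_0_iff_le)
  qed
  then have inv: "invertible ?A"
    by (simp add: invertible_left_inverse matrix_left_invertible_ker)
  have "0 \<le> matrix_inv ?A $ i $ j" for i j
  proof -
    define x where "x = matrix_inv ?A *v axis j 1"
    have "?A *v x = axis j 1"
      using inv_props[OF inv] by (simp add: x_def matrix_vector_mul_assoc)
    then have "\<forall>i. (N *v x)$i \<le> t * x$i"
    proof (intro allI)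
      fix i
      assume "?A *v x = axis j 1"
      then have "0 \<le> (?A *v x)$i" by (simp add: axis_def)
      then show "(N *v x)$i \<le> t * x$i" using scaled_id_mv[of t N x i] by simp
    qed
    then have "0 \<le> x$i" using min_principle[OF N v Nv] by blast
    then show ?thesis by (simp add: x_def matrix_vector_mult_basis column_def)
  qed
  then show ?thesis using inv by (simp add: mat_le_iff)
qed

lemma spec_rad_pos_vec:
  fixes N :: "real^'n^'n"
  assumes N: "0 \<le> N" and v: "\<forall>i. 0 < v$i" and Nv: "\<forall>i. (N *v v)$i < s * v$i"
  shows "spec_rad N < s"
proof (rule spec_rad_less)
  fix l and w :: "complex^'n"
  assume w0: "w \<noteq> 0" and ew: "cmat N *v w = l *s w"
  define S where "S j = cmod (w$j) / v$j" for j
  obtain i0 where i0: "\<forall>j. S j \<le> S i0" using finite_argmax by blast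
  define c where "c = S i0"
  obtain i where "w$i \<noteq> 0" using w0 by (auto simp: vec_eq_iff)
  then have "S i > 0" using v by (simp add: S_def)
  then have c: "c > 0" using i0 c_def by (meson less_le_trans)
  have wj: "cmod (w$j) \<le> c * v$j" for j
  proof -
    have "cmod (w$j) / v$j \<le> c" using i0 c_def S_def by auto
    then show ?thesis using v[rule_format, of j] by (simp add: divide_le_eq)
  qed
  have wi0: "cmod (w$i0) = c * v$i0" using v[rule_format, of i0] by (simp add: c_def S_def)
  have "l * w$i0 = (\<Sum>j\<in>UNIV. complex_of_real (N$i0$j) * w$j)"
    using arg_cong[OF ew, of "\<lambda>u. u$i0"] by (simp add: matrix_vector_mult_def cmat_def)
  then have "cmod l * cmod (w$i0) = cmod (\<Sum>j\<in>UNIV. complex_of_real (N$i0$j) * w$j)"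
    by (metis norm_mult)
  also have "\<dots> \<le> (\<Sum>j\<in>UNIV. cmod (complex_of_real (N$i0$j) * w$j))" by (rule norm_sum)
  also have "\<dots> = (\<Sum>j\<in>UNIV. N$i0$j * cmod (w$j))"
    using N by (intro sum.cong refl) (auto simp: norm_mult mat_le_iff)
  also have "\<dots> \<le> (\<Sum>j\<in>UNIV. N$i0$j * (c * v$j))"
    using N wj by (intro sum_mono mult_left_mono) (auto simp: mat_le_iff)
  also have "\<dots> = c * (N *v v)$i0" by (simp add: mv_entry sum_distrib_left algebra_simps)
  also have "\<dots> < c * (s * v$i0)" using c Nv by simp
  also have "\<dots> = s * cmod (w$i0)" using wi0 by simp
  finally have "cmod l * cmod (w$i0) < s * cmod (w$i0)" .
  moreover have "cmod (w$i0) > 0" using wi0 c v by simp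
  ultimately show "cmod l < s" by simp
qed

lemma real_eig_le:
  fixes N :: "real^'n^'n"
  assumes "w \<noteq> 0" "N *v w = t *s w"
  shows "\<bar>t\<bar> \<le> spec_rad N"
proof -
  define cw where "cw = (\<chi> i. complex_of_real (w$i))"
  have "cw \<noteq> 0" using assms(1) by (auto simp: cw_def vec_eq_iff)
  moreover have "cmat N *v cw = complex_of_real t *s cw"
  proof -
    have "(\<Sum>j\<in>UNIV. complex_of_real (N$i$j) * complex_of_real (w$j)) = complex_of_real (t * w$i)" for i
      using arg_cong[OF assms(2), of "\<lambda>u. u$i"] by (simp add: mv_entry flip: of_real_mult of_real_sum)
    then show ?thesis by (simp add: vec_eq_iff matrix_vector_mult_def cmat_def cw_def)
  qed
  ultimately show ?thesis using spec_rad_ge by fastforce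
qed

lemma Mpos:
  fixes N :: "real^'n^'n"
  assumes N: "0 \<le> N" and s: "spec_rad N < s"
  shows "\<exists>v. (\<forall>i. 0 < v$i) \<and> (\<forall>i. (N *v v)$i < s * v$i)"
proof (rule ccontr)
  define T where "T = {t. \<exists>v. (\<forall>i. 0 < v$i) \<and> (\<forall>i. (N *v v)$i < t * v$i)}"
  assume "\<not> ?thesis"
  then have sT: "s \<notin> T" by (simp add: T_def)
  have up: "t' \<in> T" if tT: "t \<in> T" and tt: "t \<le> t'" for t t'
  proof -
    obtain v where v: "\<forall>i. 0 < v$i" "\<forall>i. (N *v v)$i < t * v$i" using tT T_def by auto
    have "(N *v v)$i < t' * v$i" for i
    proof -
      have "t * v$i \<le> t' * v$i" by (rule mult_right_mono) (use v tt in \<open>auto simp: less_imp_le\<close>)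
      then show ?thesis using v(2) by (meson less_le_trans)
    qed
    then show ?thesis using v unfolding T_def by blast
  qed
  have down: "\<exists>e>0. t - e \<in> T" if tT: "t \<in> T" for t
  proof -
    obtain v where v: "\<forall>i. 0 < v$i" "\<forall>i. (N *v v)$i < t * v$i" using tT T_def by auto
    define r where "r i = (t * v$i - (N *v v)$i) / v$i" for i
    obtain i1 where i1: "\<forall>j. - r j \<le> - r i1" using finite_argmax[of "\<lambda>j. - r j"] by blast
    have r1: "r i1 > 0" using v unfolding r_def by (simp add: divide_pos_pos)
    have "(N *v v)$j < (t - r i1/2) * v$j" for j
    proof -
      have rj: "r i1 \<le> r j" using i1 by auto
      have vj: "v$j > 0" using v by auto
      have "(N *v v)$j = t * v$j - r j * v$j" using vj by (simp add: r_def)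
      also have "\<dots> \<le> t * v$j - r i1 * v$j" using rj vj by (simp add: mult_right_mono)
      also have "\<dots> < (t - r i1/2) * v$j" using r1 vj by (simp add: algebra_simps)
      finally show ?thesis .
    qed
    then have "t - r i1 / 2 \<in> T" using v(1) unfolding T_def by blast
    then show ?thesis using r1 by (intro exI[of _ "r i1 / 2"]) auto
  qed
  define one :: "real^'n" where "one = (\<chi> i. 1)"
  have one_pos: "\<forall>i. 0 < one$i" by (simp add: one_def)
  have ne: "T \<noteq> {}"
  proof -
    define t0 where "t0 = 1 + (\<Sum>i\<in>UNIV. \<Sum>j\<in>UNIV. N$i$j)"
    have "(N *v one)$i < t0 * one$i" for i
    proof -
      have "(N *v one)$i = (\<Sum>j\<in>UNIV. N$i$j)" by (simp add: mv_entry one_def)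
      also have "\<dots> \<le> (\<Sum>i\<in>UNIV. \<Sum>j\<in>UNIV. N$i$j)"
        by (rule member_le_sum) (use N in \<open>auto simp: mat_le_iff intro!: sum_nonneg\<close>)
      finally show ?thesis by (simp add: t0_def one_def)
    qed
    then show ?thesis using one_pos unfolding T_def by blast
  qed
  have lb: "\<forall>t\<in>T. s < t" using up sT by (meson not_le)
  have bdd: "bdd_below T" unfolding bdd_below_def using lb by (meson less_imp_le)
  define ts where "ts = Inf T"
  have s_le: "s \<le> ts" unfolding ts_def using lb by (intro cInf_greatest[OF ne]) (simp add: less_imp_le)
  have rho0: "0 \<le> spec_rad N" by (rule spec_rad_nonneg)
  have ts_gt: "spec_rad N < ts" using s s_le by linarith
  have ts_pos: "0 < ts" using rho0 ts_gt by linarith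
  let ?A = "ts *\<^sub>R mat 1 - N"
  have kerA: "x = 0" if "?A *v x = 0" for x
  proof (rule ccontr)
    assume x0: "x \<noteq> 0"
    have "N *v x = ts *s x"
    proof -
      have "(N *v x)$i = ts * x$i" for i
        using scaled_id_mv[of ts N x i] that by simp
      then show ?thesis by (simp add: vec_eq_iff)
    qed
    then have "\<bar>ts\<bar> \<le> spec_rad N" using real_eig_le[OF x0] by blast
    then show False using ts_gt by linarith
  qed
  then obtain K where K: "K ** ?A = mat 1" using matrix_left_invertible_ker[of ?A] by blast
  have K2: "?A ** K = mat 1" using K matrix_left_right_inverse by blast
  define z where "z = K *v one"
  obtain \<beta> where \<beta>: "\<beta> > 0" "\<forall>x. norm (K *v x) \<le> norm x * \<beta>"
    using bounded_linear.pos_bounded[OF matrix_vector_mul_bounded_linear[of K]] by blast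
  define P where "P = (norm z + 1) * (ts + 1)"
  have P1: "1 \<le> P" unfolding P_def using mult_mono[of 1 "norm z+1" 1 "ts+1"] ts_pos by simp
  define \<delta> where "\<delta> = min 1 (1 / (4 * \<beta> * P))"
  have \<delta>pos: "\<delta> > 0" using \<beta> P1 by (simp add: \<delta>_def)
  have \<delta>1: "\<delta> \<le> 1" by (simp add: \<delta>_def)
  have \<delta>2: "\<delta> * (4 * \<beta> * P) \<le> 1"
  proof -
    have "\<delta> \<le> 1 / (4 * \<beta> * P)" by (simp add: \<delta>_def)
    then show ?thesis using \<beta> P1 by (simp add: le_divide_eq)
  qed
  have "Inf T < ts + \<delta>" using \<delta>pos ts_def by simp
  then obtain t where t: "t \<in> T" "t < ts + \<delta>" using cInf_less_iff[OF ne bdd] by blast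
  have tge: "ts \<le> t" unfolding ts_def using cInf_lower[OF t(1) bdd] .
  define h where "h = t - ts"
  have h0: "0 \<le> h" and h\<delta>: "h \<le> \<delta>" using tge t(2) by (auto simp: h_def)
  obtain v where v: "\<forall>i. 0 < v$i" "\<forall>i. (N *v v)$i < t * v$i" using t(1) T_def by auto
  have Rt: "invertible (t *\<^sub>R mat 1 - N) \<and> 0 \<le> matrix_inv (t *\<^sub>R mat 1 - N)"
    using zpos_inv[OF N v(1) v(2)] .
  define R where "R = matrix_inv (t *\<^sub>R mat 1 - N)"
  define y where "y = R *v one"
  have Ry: "(t *\<^sub>R mat 1 - N) *v y = one"
    using inv_props[of "t *\<^sub>R mat 1 - N"] Rt by (simp add: y_def R_def matrix_vector_mul_assoc)
  have y0: "0 \<le> y" unfolding y_def R_def using Rt one_pos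
    by (intro mv_nonneg) (auto simp: vec_le_iff less_imp_le)
  have t_pos: "0 < t" using tge ts_pos by linarith
  have ylow: "1 / t \<le> y$i" for i
  proof -
    have "t * y$i - (N *v y)$i = 1" using Ry scaled_id_mv[of t N y i] by (simp add: one_def)
    moreover have "0 \<le> (N *v y)$i" using mv_nonneg[OF N y0] by (simp add: vec_le_iff)
    ultimately have "1 \<le> y$i * t" by (simp add: algebra_simps)
    then show ?thesis using t_pos by (simp add: divide_le_eq)
  qed
  have Ay: "?A *v y = one - h *\<^sub>R y"
  proof -
    have "(?A *v y)$i = (one - h *\<^sub>R y)$i" for i
      using scaled_id_mv[of ts N y i] scaled_id_mv[of t N y i] Ry
      by (simp add: h_def one_def algebra_simps)
    then show ?thesis by (simp add: vec_eq_iff)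
  qed
  have yz: "y = z - h *\<^sub>R (K *v y)"
  proof -
    have "y = K *v (?A *v y)" using K by (simp add: matrix_vector_mul_assoc)
    also have "\<dots> = z - h *\<^sub>R (K *v y)"
      by (simp add: Ay z_def matrix_vector_mult_diff_distrib matrix_vector_mult_scaleR)
    finally show ?thesis .
  qed
  have q1: "h * \<beta> * P \<le> 1 / 4"
  proof -
    have "h * \<beta> * P \<le> \<delta> * \<beta> * P" using h\<delta> \<beta> P1 by (simp add: mult_right_mono)
    then show ?thesis using \<delta>2 by (simp add: algebra_simps)
  qed
  have q2: "h * \<beta> \<le> 1 / 4"
  proof -
    have hb0: "0 \<le> h * \<beta>" using h0 \<beta> by simp
    have "h * \<beta> * 1 \<le> h * \<beta> * P" by (rule mult_left_mono[OF P1 hb0])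
    then have "h * \<beta> \<le> h * \<beta> * P" by simp
    then show ?thesis using q1 by linarith
  qed
  have ny: "norm y \<le> 2 * norm z"
  proof -
    have "norm y \<le> norm z + norm (h *\<^sub>R (K *v y))"
      using yz norm_triangle_ineq4[of z "h *\<^sub>R (K *v y)"] by simp
    also have "\<dots> = norm z + h * norm (K *v y)" using h0 by simp
    also have "\<dots> \<le> norm z + h * (norm y * \<beta>)" using \<beta> h0 by (simp add: mult_left_mono)
    also have "\<dots> \<le> norm z + norm y / 4"
    proof -
      have "h * (norm y * \<beta>) = (h * \<beta>) * norm y" by simp
      also have "\<dots> \<le> (1/4) * norm y" using mult_right_mono[OF q2 norm_ge_zero[of y]] .
      finally show ?thesis by simp
    qed
    finally show ?thesis using norm_ge_zero[of z] by linarith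
  qed
  have zpos: "0 < z$i" for i
  proof -
    have zi: "z$i = y$i + h * (K *v y)$i" using arg_cong[OF yz, of "\<lambda>u. u$i"] by simp
    have "\<bar>(K *v y)$i\<bar> \<le> norm (K *v y)" by (rule component_le_norm_cart)
    also have "\<dots> \<le> norm y * \<beta>" using \<beta> by blast
    also have "\<dots> \<le> 2 * norm z * \<beta>" using ny \<beta> by (simp add: mult_right_mono)
    finally have "\<bar>(K *v y)$i\<bar> \<le> 2 * norm z * \<beta>" .
    then have "h * \<bar>(K *v y)$i\<bar> \<le> h * (2 * norm z * \<beta>)" using h0 by (simp add: mult_left_mono)
    also have "\<dots> \<le> 2 * (h * \<beta> * (norm z + 1))" using h0 \<beta> by (simp add: algebra_simps mult_left_mono)
    also have "\<dots> < 1 / (ts + 1)"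
    proof -
      have "h * \<beta> * (norm z + 1) * (ts + 1) \<le> 1/4" using q1 by (simp add: P_def algebra_simps)
      then have "h * \<beta> * (norm z + 1) \<le> 1 / (4 * (ts + 1))" using ts_pos by (simp add: le_divide_eq algebra_simps)
      then show ?thesis using ts_pos by (simp add: field_simps)
    qed
    also have "\<dots> \<le> 1 / t" using t(2) \<delta>1 t_pos by (simp add: frac_le)
    also have "\<dots> \<le> y$i" by (rule ylow)
    finally have "h * \<bar>(K *v y)$i\<bar> < y$i" .
    moreover have "- (h * \<bar>(K *v y)$i\<bar>) \<le> h * (K *v y)$i" using h0
      by (metis abs_ge_minus_self abs_mult abs_of_nonneg minus_le_iff)
    ultimately show ?thesis using zi by linarith
  qed
  have Az: "?A *v z = one" using K2 by (simp add: z_def matrix_vector_mul_assoc)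
  have "(N *v z)$i < ts * z$i" for i
    using scaled_id_mv[of ts N z i] Az by (simp add: one_def)
  then have tsT: "ts \<in> T" using zpos unfolding T_def by blast
  then obtain e where e: "e > 0" "ts - e \<in> T" using down by blast
  have "Inf T \<le> ts - e" using cInf_lower[OF e(2) bdd] .
  then have "ts \<le> ts - e" unfolding ts_def .
  then show False using e by linarith
qed

lemma nsM_props:
  fixes A :: "real^'n^'n"
  assumes "nonsing_M_matrix A"
  shows "invertible A \<and> 0 \<le> matrix_inv A \<and> (\<exists>v. (\<forall>i. 0 < v$i) \<and> (\<forall>i. 0 < (A *v v)$i))"
proof -
  obtain s N where N: "0 \<le> N" "A = s *\<^sub>R mat 1 - N" "spec_rad N < s"
    using assms unfolding nonsing_M_matrix_def by blast
  obtain v where v: "\<forall>i. 0 < v$i" "\<forall>i. (N *v v)$i < s * v$i" using Mpos[OF N(1) N(3)] by blast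
  have "\<forall>i. 0 < (A *v v)$i" using v(2) N(2) scaled_id_mv[of s N v] by simp
  then show ?thesis using zpos_inv[OF N(1) v] N(2) v(1) by blast
qed

lemma neg_sq: "(A::real^'n^'n) ** A = (- A) ** (- A)"
  by (simp add: mm_neg_l mm_neg_r)

lemma fixpoint_exists:
  fixes K0 K1 :: "real^'n^'n" and u :: "real^'n"
  assumes K0: "0 \<le> K0" and K1: "0 \<le> K1" and u: "\<forall>i. 0 < u$i"
    and wu: "(K0 + K1) *v u \<le> u"
  shows "\<exists>P. P \<le> 0 \<and> P = - (K0 + K1 ** (P ** P)) \<and> (- P) *v u \<le> (K0 + K1) *v u"
proof -
  define w where "w = (K0 + K1) *v u"
  define G where "G M = - (K0 + K1 ** (M ** M))" for M :: "real^'n^'n"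
  define Z where "Z j = (G ^^ j) 0" for j
  have Z0: "Z 0 = 0" by (simp add: Z_def)
  have ZS: "Z (Suc j) = G (Z j)" for j by (simp add: Z_def)
  have u0: "0 \<le> u" using u by (simp add: vec_le_iff less_imp_le)
  have K01: "0 \<le> K0 + K1" using K0 K1 by simp
  have w0: "0 \<le> w" unfolding w_def by (rule mv_nonneg[OF K01 u0])
  have wu': "w \<le> u" using wu w_def by simp
  have Gw: "(- G M) *v u \<le> w" if M0: "M \<le> 0" and Mb: "(- M) *v u \<le> w" for M
  proof -
    have nM: "0 \<le> - M" using M0 by simp
    have "(M ** M) *v u = (- M) *v ((- M) *v u)" by (simp add: neg_sq[of M] matrix_vector_mul_assoc)
    also have "\<dots> \<le> (- M) *v w" by (rule mv_mono_r[OF nM Mb])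
    also have "\<dots> \<le> (- M) *v u" by (rule mv_mono_r[OF nM wu'])
    also have "\<dots> \<le> w" by (rule Mb)
    also have "\<dots> \<le> u" by (rule wu')
    finally have "(M ** M) *v u \<le> u" .
    then have "K1 *v ((M ** M) *v u) \<le> K1 *v u" by (rule mv_mono_r[OF K1])
    then have "K0 *v u + (K1 ** (M ** M)) *v u \<le> K0 *v u + K1 *v u"
      by (simp add: matrix_vector_mul_assoc)
    then show ?thesis
      by (simp add: G_def w_def matrix_vector_mult_add_rdistrib)
  qed
  have Gmono: "G M' \<le> G M" if "M' \<le> M" "M \<le> 0" for M M'
  proof -
    have a: "0 \<le> - M" "- M \<le> - M'" using that by auto
    have "(- M) ** (- M) \<le> (- M') ** (- M')" by (rule mm_mono[OF a(1) a(2) a(1) a(2)])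
    then have "M ** M \<le> M' ** M'" by (simp add: neg_sq[of M] neg_sq[of M'])
    then have "K1 ** (M ** M) \<le> K1 ** (M' ** M')" by (rule mm_mono_l[OF K1])
    then show ?thesis by (simp add: G_def)
  qed
  have inv: "Z j \<le> 0 \<and> Z (Suc j) \<le> Z j \<and> (- Z j) *v u \<le> w" for j
  proof (induction j)
    case 0
    have "Z (Suc 0) \<le> 0" using K0 by (simp add: ZS Z0 G_def)
    then show ?case using w0 by (simp add: Z0)
  next
    case (Suc j)
    then have a: "Z j \<le> 0" "Z (Suc j) \<le> Z j" "(- Z j) *v u \<le> w" by auto
    have b: "Z (Suc j) \<le> 0" using a by (meson order_trans)
    have c: "(- Z (Suc j)) *v u \<le> w" unfolding ZS by (rule Gw[OF a(1) a(3)])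
    have d: "Z (Suc (Suc j)) \<le> Z (Suc j)" unfolding ZS[of "Suc j"] ZS[of j]
      by (rule Gmono[OF _ a(1)]) (simp add: a(2)[unfolded ZS])
    show ?case using b c d by blast
  qed
  have entry_le0: "Z j $ a $ b \<le> 0" for j a b using inv[of j] by (simp add: mat_le_iff)
  have entry_lb: "- (u$a / u$b) \<le> Z j $ a $ b" for j a b
  proof -
    have nz: "\<forall>c. 0 \<le> - Z j $ a $ c" using entry_le0 by simp
    have nn: "\<forall>c. 0 \<le> - Z j $ a $ c * u$c"
    proof
      fix c show "0 \<le> - Z j $ a $ c * u$c" using nz[rule_format, of c] u[rule_format, of c]
        by (intro mult_nonneg_nonneg) simp_all
    qed
    have "- Z j $ a $ b * u$b \<le> (\<Sum>c\<in>UNIV. - Z j $ a $ c * u$c)"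
      by (rule member_le_sum) (use nn in auto)
    also have "\<dots> = ((- Z j) *v u)$a" by (simp add: mv_entry)
    also have "\<dots> \<le> w$a" using inv[of j] by (simp add: vec_le_iff)
    also have "\<dots> \<le> u$a" using wu' by (simp add: vec_le_iff)
    finally have "- Z j $ a $ b * u$b \<le> u$a" .
    then have "- Z j $ a $ b \<le> u$a / u$b" using u by (simp add: le_divide_eq)
    then show ?thesis by simp
  qed
  have conv: "(\<lambda>j. Z j $ a $ b) \<longlonglongrightarrow> lim (\<lambda>j. Z j $ a $ b)" for a b
  proof -
    have dec: "antimono_on UNIV (\<lambda>j. Z j $ a $ b)"
      by (rule decseq_SucI) (use inv in \<open>simp add: mat_le_iff\<close>)
    have lbs: "\<forall>i. - (u$a / u$b) \<le> Z i $ a $ b" using entry_lb by blast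
    obtain L where L: "(\<lambda>j. Z j $ a $ b) \<longlonglongrightarrow> L"
      by (rule decseq_convergent[OF dec lbs])
    then have "convergent (\<lambda>j. Z j $ a $ b)" by (rule convergentI)
    then show ?thesis by (simp only: convergent_LIMSEQ_iff)
  qed
  define P where "P = (\<chi> a b. lim (\<lambda>j. Z j $ a $ b))"
  have convP: "(\<lambda>j. Z j $ a $ b) \<longlonglongrightarrow> P $ a $ b" for a b
    using conv by (simp add: P_def)
  have P0: "P \<le> 0"
    unfolding mat_le_iff
  proof (intro allI)
    fix a b
    show "P $ a $ b \<le> 0 $ a $ b"
      using LIMSEQ_le_const2[OF convP[of a b], of 0] entry_le0 by simp
  qed
  have fixP: "P = G P"
  proof -
    have "P $ a $ b = G P $ a $ b" for a b
    proof -
      have l1: "(\<lambda>j. Z (Suc j) $ a $ b) \<longlonglongrightarrow> P $ a $ b" using LIMSEQ_Suc[OF convP] .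
      have e: "Z (Suc j) $ a $ b = - (K0 $ a $ b + (\<Sum>c\<in>UNIV. K1 $ a $ c * (\<Sum>d\<in>UNIV. Z j $ c $ d * Z j $ d $ b)))" for j
        by (simp add: ZS G_def mm_entry)
      have l2: "(\<lambda>j. Z (Suc j) $ a $ b) \<longlonglongrightarrow> - (K0 $ a $ b + (\<Sum>c\<in>UNIV. K1 $ a $ c * (\<Sum>d\<in>UNIV. P $ c $ d * P $ d $ b)))"
        unfolding e by (intro tendsto_intros convP)
      have "P $ a $ b = - (K0 $ a $ b + (\<Sum>c\<in>UNIV. K1 $ a $ c * (\<Sum>d\<in>UNIV. P $ c $ d * P $ d $ b)))"
        using LIMSEQ_unique[OF l1 l2] .
      then show ?thesis by (simp add: G_def mm_entry)
    qed
    then show ?thesis by (simp add: vec_eq_iff)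
  qed
  have bound: "(- P) *v u \<le> w"
  proof -
    have "((- P) *v u) $ a \<le> w $ a" for a
    proof -
      have l: "(\<lambda>j. ((- Z j) *v u) $ a) \<longlonglongrightarrow> ((- P) *v u) $ a"
        unfolding mv_entry by (simp only: vector_uminus_component) (intro tendsto_intros convP)
      have "\<forall>j. ((- Z j) *v u) $ a \<le> w $ a" using inv by (simp add: vec_le_iff)
      then show ?thesis
        using LIMSEQ_le_const2[OF l, of "w $ a"] by blast
    qed
    then show ?thesis by (simp add: vec_le_iff)
  qed
  show ?thesis using P0 fixP bound by (auto simp: G_def w_def)
qed

lemma mpow_0[simp]: "mpow A 0 = mat 1" by (simp add: mpow_def)
lemma mpow_Suc: "mpow A (Suc n) = A ** mpow A n" by (simp add: mpow_def)
lemma mpow_1: "mpow (A::real^'n^'n) 1 = A" by (simp add: mpow_Suc)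
lemma mpow_add: "mpow (A::real^'n^'n) (m + n) = mpow A m ** mpow A n"
  by (induction m) (simp_all add: mpow_Suc matrix_mul_assoc)
lemma mpow_double: "mpow (A::real^'n^'n) (2 * n) = mpow (A ** A) n"
proof (induction n)
  case 0 then show ?case by simp
next
  case (Suc n)
  have "mpow A (2 * Suc n) = A ** (A ** mpow A (2 * n))"
    by (simp add: mpow_Suc)
  then show ?case using Suc by (simp add: mpow_Suc matrix_mul_assoc)
qed
lemma mat1_nonneg: "0 \<le> (mat 1 :: real^'n^'n)" by (simp add: mat_le_iff mat_def)
lemma mpow_nonneg: "0 \<le> (A::real^'n^'n) \<Longrightarrow> 0 \<le> mpow A n"
  by (induction n) (simp_all add: mpow_Suc mat1_nonneg mm_nonneg)
lemma npnp: "(X::real^'n^'n) \<le> 0 \<Longrightarrow> (Y::real^'n^'n) \<le> 0 \<Longrightarrow> 0 \<le> X ** Y"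
proof -
  assume a: "X \<le> 0" "Y \<le> 0"
  have "X ** Y = (- X) ** (- Y)" by (simp add: mm_neg_l mm_neg_r)
  moreover have "0 \<le> (- X) ** (- Y)" using a by (intro mm_nonneg) auto
  ultimately show ?thesis by simp
qed
lemma mpow_even_nonneg: "(A::real^'n^'n) \<le> 0 \<Longrightarrow> 0 \<le> mpow A (2 ^ Suc k)"
  using mpow_nonneg[OF npnp[of A A]] mpow_double[of A "2^k"] by simp
lemma mpow_double_pow: "mpow (A::real^'n^'n) (2 ^ Suc k) = mpow A (2^k) ** mpow A (2^k)"
  using mpow_add[of A "2^k" "2^k"] by (simp add: mult_2)

lemma sq_nonneg_mat:
  assumes "0 \<le> (E::real^'n^'n) \<or> E \<le> 0" and "0 \<le> W"
  shows "0 \<le> E ** W ** E"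
  using assms(1)
proof
  assume "0 \<le> E" then show ?thesis using assms(2) by (simp add: mm_nonneg)
next
  assume "E \<le> 0"
  then have "0 \<le> (- E) ** W ** (- E)" using assms(2) by (simp add: mm_nonneg)
  then show ?thesis by (simp add: mm_neg_l mm_neg_r)
qed

lemma sign4:
  fixes E F V X :: "real^'n^'n"
  assumes "0 \<le> V" "X \<le> 0" "(0 \<le> E \<and> 0 \<le> F) \<or> (E \<le> 0 \<and> F \<le> 0)"
  shows "F ** V ** X ** E \<le> 0"
  using assms(3)
proof
  assume a: "0 \<le> E \<and> 0 \<le> F"
  have "0 \<le> F ** V ** (- X) ** E" using a assms(1,2) by (simp add: mm_nonneg)
  then show ?thesis by (simp add: mm_neg_l mm_neg_r)
next
  assume a: "E \<le> 0 \<and> F \<le> 0"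
  have "0 \<le> (- F) ** V ** (- X) ** (- E)" using a assms(1,2) by (simp add: mm_nonneg)
  then show ?thesis by (simp add: mm_neg_l mm_neg_r)
qed

lemma sda_step:
  fixes E F X Y P R V W :: "real^'n^'n"
  assumes W: "W ** (mat 1 - Y ** X) = mat 1" and V: "V ** (mat 1 - X ** Y) = mat 1"
    and hE: "E = (mat 1 - Y ** P) ** R" and hX: "X - P = - (F ** P ** R)"
  shows "E ** W ** E = (mat 1 - (Y + E ** W ** Y ** F) ** P) ** (R ** R)"
    and "(X + F ** V ** X ** E) - P = - ((F ** V ** F) ** P ** (R ** R))"
proof -
  have b: "F ** P ** R = P - X" using hX by (metis minus_diff_eq neg_equal_iff_equal)
  have a: "W ** (mat 1 - Y ** P) = mat 1 - W ** Y ** (P - X)"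
  proof -
    have "mat 1 - Y ** P = (mat 1 - Y ** X) - Y ** (P - X)" by (simp add: mm_diff_l)
    then have "W ** (mat 1 - Y ** P) = W ** (mat 1 - Y ** X) - W ** (Y ** (P - X))"
      by (simp add: mm_diff_l)
    then show ?thesis using W by (simp add: matrix_mul_assoc)
  qed
  have "E ** W ** E = E ** (W ** (mat 1 - Y ** P)) ** R"
    by (subst (2) hE) (simp add: matrix_mul_assoc)
  also have "\<dots> = E ** R - E ** W ** Y ** (P - X) ** R"
    unfolding a by (simp add: mm_diff_l mm_diff_r matrix_mul_assoc)
  also have "\<dots> = E ** R - E ** W ** Y ** (F ** P ** R) ** R" by (simp add: b)
  also have "\<dots> = (mat 1 - (Y + E ** W ** Y ** F) ** P) ** (R ** R)"
    by (simp add: hE mm_diff_r mm_add_r matrix_mul_assoc)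
  finally show "E ** W ** E = (mat 1 - (Y + E ** W ** Y ** F) ** P) ** (R ** R)" .
  have c: "V ** X ** Y ** P = V ** P - P"
  proof -
    have "V ** (mat 1 - X ** Y) ** P = P" using V by simp
    then have "V ** P - V ** X ** Y ** P = P" by (simp add: mm_diff_l mm_diff_r matrix_mul_assoc)
    then have "V ** P = P + V ** X ** Y ** P" by (simp add: diff_eq_eq)
    then show ?thesis by simp
  qed
  have "(X + F ** V ** X ** E) - P = (X - P) + F ** V ** X ** E" by simp
  also have "\<dots> = - (F ** P ** R) + (F ** V ** X ** R - F ** (V ** X ** Y ** P) ** R)"
    by (simp add: hX hE mm_diff_l mm_diff_r matrix_mul_assoc)
  also have "\<dots> = - (F ** P ** R) + (F ** V ** X ** R - F ** (V ** P - P) ** R)"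
    by (simp only: c)
  also have "\<dots> = F ** V ** X ** R - F ** V ** P ** R"
    by (simp add: mm_diff_l mm_diff_r matrix_mul_assoc)
  also have "\<dots> = - (F ** V ** (F ** P ** R) ** R)"
    by (simp add: b mm_diff_l mm_diff_r matrix_mul_assoc)
  also have "\<dots> = - ((F ** V ** F) ** P ** (R ** R))"
    by (simp add: matrix_mul_assoc)
  finally show "(X + F ** V ** X ** E) - P = - ((F ** V ** F) ** P ** (R ** R))" .
qed

lemma key_bound:
  fixes X Y Phi Psi :: "real^'n^'n"
  assumes "Phi \<le> X" "X \<le> 0" "Psi \<le> Y" "Y \<le> 0" "\<forall>i. 0 < u$i"
    "(- Phi) *v u \<le> w" "(- Psi) *v u \<le> w" "\<forall>i. w$i < u$i"
  shows "\<forall>i. ((X ** Y) *v u)$i < u$i"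
proof -
  have u0: "0 \<le> u" using assms(5) by (simp add: vec_le_iff less_imp_le)
  have wu: "w \<le> u" using assms(8) by (simp add: vec_le_iff less_imp_le)
  have nX: "0 \<le> - X" using assms(2) by simp
  have "(X ** Y) *v u = (- X) *v ((- Y) *v u)"
    by (simp add: mm_neg_l mm_neg_r matrix_vector_mul_assoc)
  also have "\<dots> \<le> (- X) *v ((- Psi) *v u)"
    using assms(3) u0 by (intro mv_mono_r[OF nX] mv_mono_l) auto
  also have "\<dots> \<le> (- X) *v w" by (rule mv_mono_r[OF nX assms(7)])
  also have "\<dots> \<le> (- X) *v u" by (rule mv_mono_r[OF nX wu])
  also have "\<dots> \<le> (- Phi) *v u" using assms(1) u0 by (intro mv_mono_l) auto
  also have "\<dots> \<le> w" by (rule assms(6))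
  finally show ?thesis using assms(8) by (auto simp: vec_le_iff intro: le_less_trans)
qed

lemma nsM_of:
  fixes N :: "real^'n^'n"
  assumes "0 \<le> N" "\<forall>i. 0 < v$i" "\<forall>i. (N *v v)$i < v$i"
  shows "nonsing_M_matrix (mat 1 - N) \<and> invertible (mat 1 - N) \<and> 0 \<le> matrix_inv (mat 1 - N)"
proof -
  have v1: "\<forall>i. (N *v v)$i < 1 * v$i" using assms(3) by simp
  have "spec_rad N < 1" by (rule spec_rad_pos_vec[OF assms(1) assms(2) v1])
  then have "nonsing_M_matrix (mat 1 - N)" unfolding nonsing_M_matrix_def
    using assms(1) by (intro exI[of _ 1] exI[of _ N]) simp
  moreover have "invertible (1 *\<^sub>R mat 1 - N) \<and> 0 \<le> matrix_inv (1 *\<^sub>R mat 1 - N)"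
    by (rule zpos_inv[OF assms(1) assms(2) v1])
  ultimately show ?thesis by simp
qed

lemma pos_row:
  fixes K B :: "real^'n^'n"
  assumes "0 \<le> K" "K ** B = mat 1" "\<forall>i. 0 < d$i"
  shows "0 < (K *v d)$i"
proof -
  have "\<exists>j. K$i$j \<noteq> 0"
  proof (rule ccontr)
    assume "\<not> ?thesis"
    then have "(K ** B)$i$i = 0" by (simp add: mm_entry)
    then show False using assms(2) by (simp add: mat_def)
  qed
  then obtain j where j: "K$i$j \<noteq> 0" by blast
  then have Kj: "0 < K$i$j" using assms(1) by (simp add: mat_le_iff order_le_neq_trans)
  have nn: "\<forall>k. 0 \<le> K$i$k * d$k" using assms(1,3) by (simp add: mat_le_iff less_imp_le)
  have "K$i$j * d$j \<le> (\<Sum>k\<in>UNIV. K$i$k * d$k)" by (rule member_le_sum) (use nn in auto)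
  moreover have "0 < K$i$j * d$j" using Kj assms(3) by simp
  ultimately show ?thesis by (simp add: mv_entry)
qed

lemma final_bound:
  fixes Q X Psi D :: "real^'n^'n"
  assumes "0 \<le> Q" "X \<le> 0" "Psi \<le> 0" "D = (mat 1 - X ** Psi) ** Q"
  shows "0 \<le> Q - D" 
proof -
  have "Q - D = (X ** Psi) ** Q" using assms(4) by (simp add: mm_diff_r)
  then show ?thesis using npnp[OF assms(2,3)] assms(1) by (simp add: mm_nonneg)
qed

lemma mpow_Suc0[simp]: "mpow (A::real^'n^'n) (Suc 0) = A" by (simp add: mpow_Suc)

lemmas mmsimps = mm_neg_l mm_neg_r mm_add_r mm_diff_r mm_diff_l matrix_add_ldistrib matrix_mul_assoc

theorem theorem3p5:
  fixes B C Phi Psi :: "real^'n^'n"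
    and X Y E F :: "nat \<Rightarrow> real^'n^'n"
  assumes hB: "nonsing_M_matrix B"
    and hC: "M_matrix C"
    and hBC: "matrix_inv B ** C \<ge> 0"
    and hBCI: "nonsing_M_matrix (B - C - mat 1)"
    and hPhi: "max_nonpos_solvent B C Phi"
    and hPsi: "max_nonpos_dual_solvent B C Psi"
    and X0: "X 0 = - (matrix_inv B ** C)" and E0: "E 0 = - (matrix_inv B ** C)"
    and Y0: "Y 0 = - matrix_inv B" and F0: "F 0 = - matrix_inv B"
    and ES: "\<And>i. E (Suc i) = E i ** matrix_inv (mat 1 - Y i ** X i) ** E i"
    and FS: "\<And>i. F (Suc i) = F i ** matrix_inv (mat 1 - X i ** Y i) ** F i"
    and XS: "\<And>i. X (Suc i) = X i + F i ** matrix_inv (mat 1 - X i ** Y i) ** X i ** E i"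
    and YS: "\<And>i. Y (Suc i) = Y i + E i ** matrix_inv (mat 1 - Y i ** X i) ** Y i ** F i"
  shows "(\<forall>i. invertible (mat 1 - X i ** Y i) \<and> invertible (mat 1 - Y i ** X i)) \<and>
         (\<forall>k\<ge>1.
            E k = (mat 1 - Y k ** Phi) ** mpow Phi (2^k) \<and> E k \<ge> 0 \<and>
            F k = (mat 1 - X k ** Psi) ** mpow Psi (2^k) \<and> F k \<ge> 0 \<and>
            nonsing_M_matrix (mat 1 - X k ** Y k) \<and> nonsing_M_matrix (mat 1 - Y k ** X k) \<and>
            Phi \<le> X k \<and> X k \<le> X (k - 1) \<and> X (k - 1) \<le> 0 \<and>
            Psi \<le> Y k \<and> Y k \<le> Y (k - 1) \<and> Y (k - 1) \<le> 0 \<and>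
            0 \<le> X k - Phi \<and> X k - Phi \<le> mpow Psi (2^k) ** (- Phi) ** mpow Phi (2^k) \<and>
            0 \<le> Y k - Psi \<and> Y k - Psi \<le> mpow Phi (2^k) ** (- Psi) ** mpow Psi (2^k))"
proof -
  have dn: "\<And>A B :: real^'n^'n. 0 \<le> A - B \<longleftrightarrow> B \<le> A" by (simp add: mat_le_iff)
  define Bi where "Bi = matrix_inv B"
  have hBp: "invertible B \<and> 0 \<le> matrix_inv B" using nsM_props[OF hB] by blast
  have Bi0: "0 \<le> Bi" using hBp Bi_def by simp
  have BBi: "B ** Bi = mat 1" and BiB: "Bi ** B = mat 1" using inv_props hBp Bi_def by blast+
  obtain u where u: "\<forall>i. 0 < u$i" "\<forall>i. 0 < ((B - C - mat 1) *v u)$i"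
    using nsM_props[OF hBCI] by blast
  have u0: "0 \<le> u" using u(1) by (simp add: vec_le_iff less_imp_le)
  define w where "w = Bi *v ((C + mat 1) *v u)"
  have wlt: "\<forall>i. w$i < u$i"
  proof
    fix i
    have "Bi *v ((B - C - mat 1) *v u) = u - w"
    proof -
      have "B - C - mat 1 = B - (C + mat 1)" by simp
      then have "(B - C - mat 1) *v u = B *v u - (C + mat 1) *v u"
        by (simp add: matrix_vector_mult_diff_rdistrib matrix_vector_mult_add_rdistrib)
      then show ?thesis
        by (simp add: matrix_vector_mult_diff_distrib matrix_vector_mul_assoc BiB w_def matrix_vector_mult_add_rdistrib)
    qed
    moreover have "0 < (Bi *v ((B - C - mat 1) *v u))$i" by (rule pos_row[OF Bi0 BiB u(2)])
    ultimately show "w$i < u$i" by simp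
  qed
  have wu: "w \<le> u" using wlt by (simp add: vec_le_iff less_imp_le)
  have w_eq: "(Bi ** C + Bi) *v u = w"
    by (simp add: w_def matrix_vector_mult_add_rdistrib matrix_vector_right_distrib matrix_vector_mul_assoc)
  have K0: "0 \<le> Bi ** C" using hBC Bi_def by simp
  have Phi0: "Phi \<le> 0" and PhiEq: "Phi ** Phi + B ** Phi + C = 0"
    and PhiMax: "\<And>X. X \<le> 0 \<Longrightarrow> X ** X + B ** X + C = 0 \<Longrightarrow> X \<le> Phi"
    using hPhi unfolding max_nonpos_solvent_def by blast+
  have Psi0: "Psi \<le> 0" and PsiEq: "C ** Psi ** Psi + B ** Psi + mat 1 = 0"
    and PsiMax: "\<And>Y. Y \<le> 0 \<Longrightarrow> C ** Y ** Y + B ** Y + mat 1 = 0 \<Longrightarrow> Y \<le> Psi"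
    using hPsi unfolding max_nonpos_dual_solvent_def by blast+
  obtain P where P: "P \<le> 0" "P = - (Bi ** C + Bi ** (P ** P))" "(- P) *v u \<le> (Bi ** C + Bi) *v u"
    using fixpoint_exists[OF K0 Bi0 u(1)] w_eq wu by auto
  have "B ** P = B ** (- (Bi ** C + Bi ** (P ** P)))" using P(2) by (rule arg_cong)
  also have "\<dots> = - (C + P ** P)"
    by (simp add: matrix_add_ldistrib mm_diff_l mm_neg_r matrix_mul_assoc BBi)
  finally have "P ** P + B ** P + C = 0" by simp
  then have PPhi: "P \<le> Phi" using PhiMax P(1) by blast
  obtain Q where Q: "Q \<le> 0" "Q = - (Bi + (Bi ** C) ** (Q ** Q))" "(- Q) *v u \<le> (Bi + Bi ** C) *v u"
    using fixpoint_exists[OF Bi0 K0 u(1)] w_eq wu by (auto simp: add.commute)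
  have "B ** Q = B ** (- (Bi + (Bi ** C) ** (Q ** Q)))" using Q(2) by (rule arg_cong)
  also have "\<dots> = - (mat 1 + C ** (Q ** Q))"
    by (simp add: matrix_add_ldistrib mm_diff_l mm_neg_r matrix_mul_assoc BBi)
  finally have "C ** Q ** Q + B ** Q + mat 1 = 0" by (simp add: matrix_mul_assoc)
  then have QPsi: "Q \<le> Psi" using PsiMax Q(1) by blast
  have PhiB: "(- Phi) *v u \<le> w"
  proof -
    have "(- Phi) *v u \<le> (- P) *v u" using PPhi u0 by (intro mv_mono_l) auto
    then show ?thesis using P(3) w_eq by simp
  qed
  have PsiB: "(- Psi) *v u \<le> w"
  proof -
    have "(- Psi) *v u \<le> (- Q) *v u" using QPsi u0 by (intro mv_mono_l) auto
    then show ?thesis using Q(3) w_eq by (simp add: add.commute)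
  qed
  have Minv: "nonsing_M_matrix (mat 1 - Xa ** Ya) \<and> invertible (mat 1 - Xa ** Ya) \<and> 0 \<le> matrix_inv (mat 1 - Xa ** Ya) \<and>
      nonsing_M_matrix (mat 1 - Ya ** Xa) \<and> invertible (mat 1 - Ya ** Xa) \<and> 0 \<le> matrix_inv (mat 1 - Ya ** Xa)"
    if "Phi \<le> Xa" "Xa \<le> 0" "Psi \<le> Ya" "Ya \<le> 0" for Xa Ya
  proof -
    have 1: "\<forall>i. ((Xa ** Ya) *v u)$i < u$i"
      by (rule key_bound[OF that u(1) PhiB PsiB wlt])
    have 2: "\<forall>i. ((Ya ** Xa) *v u)$i < u$i"
      by (rule key_bound[OF that(3,4,1,2) u(1) PsiB PhiB wlt])
    show ?thesis using nsM_of[OF npnp[OF that(2,4)] u(1) 1] nsM_of[OF npnp[OF that(4,2)] u(1) 2] by blast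
  qed
  define INV where "INV k \<longleftrightarrow> Phi \<le> X k \<and> X k \<le> 0 \<and> Psi \<le> Y k \<and> Y k \<le> 0 \<and>
     E k = (mat 1 - Y k ** Phi) ** mpow Phi (2^k) \<and> F k = (mat 1 - X k ** Psi) ** mpow Psi (2^k) \<and>
     X k - Phi = - (F k ** Phi ** mpow Phi (2^k)) \<and> Y k - Psi = - (E k ** Psi ** mpow Psi (2^k)) \<and>
     ((0 \<le> E k \<and> 0 \<le> F k) \<or> (E k \<le> 0 \<and> F k \<le> 0))" for k
  have e1: "Bi ** (Phi ** Phi) = - Phi - Bi ** C"
  proof -
    have "Phi ** Phi + (B ** Phi + C) = 0" using PhiEq by (simp add: add.assoc)
    then have "Phi ** Phi = - (B ** Phi + C)" by (simp only: eq_neg_iff_add_eq_0)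
    then show ?thesis by (simp add: mm_neg_r mm_diff_l matrix_add_ldistrib matrix_mul_assoc BiB)
  qed
  have e2: "Bi ** (C ** Psi ** Psi) = - Psi - Bi"
  proof -
    have "C ** Psi ** Psi + (B ** Psi + mat 1) = 0" using PsiEq by (simp add: add.assoc)
    then have "C ** Psi ** Psi = - (B ** Psi + mat 1)" by (simp only: eq_neg_iff_add_eq_0)
    then show ?thesis by (simp add: mm_neg_r mm_diff_l matrix_add_ldistrib matrix_mul_assoc BiB)
  qed
  have INV0: "INV 0"
  proof -
    have a1: "E 0 = (mat 1 - Y 0 ** Phi) ** mpow Phi (2^0)"
    proof -
      have "(mat 1 - Y 0 ** Phi) ** Phi = Phi + Bi ** (Phi ** Phi)"
        by (simp add: Y0 Bi_def[symmetric] mmsimps)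
      then show ?thesis by (simp add: mpow_1 e1 E0 Bi_def[symmetric])
    qed
    have a2: "F 0 = (mat 1 - X 0 ** Psi) ** mpow Psi (2^0)"
    proof -
      have "(mat 1 - X 0 ** Psi) ** Psi = Psi + Bi ** (C ** Psi ** Psi)"
        by (simp add: X0 Bi_def[symmetric] mmsimps)
      then show ?thesis by (simp add: mpow_1 e2 F0 Bi_def[symmetric])
    qed
    have a3: "X 0 - Phi = - (F 0 ** Phi ** mpow Phi (2^0))"
    proof -
      have "- (F 0 ** Phi ** Phi) = Bi ** (Phi ** Phi)" by (simp add: F0 Bi_def[symmetric] mm_neg_l matrix_mul_assoc)
      then show ?thesis by (simp add: mpow_1 e1 X0 Bi_def[symmetric])
    qed
    have a4: "Y 0 - Psi = - (E 0 ** Psi ** mpow Psi (2^0))"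
    proof -
      have "- (E 0 ** Psi ** Psi) = Bi ** (C ** Psi ** Psi)" by (simp add: E0 Bi_def[symmetric] mm_neg_l matrix_mul_assoc)
      then show ?thesis by (simp add: mpow_1 e2 Y0 Bi_def[symmetric])
    qed
    have b1: "X 0 \<le> 0" using K0 by (simp add: X0 Bi_def[symmetric])
    have b2: "Y 0 \<le> 0" using Bi0 by (simp add: Y0 Bi_def[symmetric])
    have b3: "Phi \<le> X 0"
    proof -
      have "X 0 - Phi = Bi ** (Phi ** Phi)" using a3 by (simp add: mpow_1 F0 Bi_def[symmetric] mm_neg_l matrix_mul_assoc)
      moreover have "0 \<le> Bi ** (Phi ** Phi)" using Bi0 npnp[OF Phi0 Phi0] by (rule mm_nonneg)
      ultimately show ?thesis using dn by metis
    qed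
    have b4: "Psi \<le> Y 0"
    proof -
      have "Y 0 - Psi = (Bi ** C) ** (Psi ** Psi)" using a4 by (simp add: mpow_1 E0 Bi_def[symmetric] mm_neg_l matrix_mul_assoc)
      moreover have "0 \<le> (Bi ** C) ** (Psi ** Psi)" using K0 npnp[OF Psi0 Psi0] by (rule mm_nonneg)
      ultimately show ?thesis using dn by metis
    qed
    have s: "E 0 \<le> 0 \<and> F 0 \<le> 0" using K0 Bi0 by (simp add: E0 F0 Bi_def[symmetric])
    show ?thesis unfolding INV_def using a1 a2 a3 a4 b1 b2 b3 b4 s by blast
  qed
  have step: "INV (Suc k) \<and> X (Suc k) \<le> X k \<and> Y (Suc k) \<le> Y k" if IK: "INV k" for k
  proof -
    have bk: "Phi \<le> X k" "X k \<le> 0" "Psi \<le> Y k" "Y k \<le> 0" using IK INV_def by blast+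
    have ak: "E k = (mat 1 - Y k ** Phi) ** mpow Phi (2^k)" "F k = (mat 1 - X k ** Psi) ** mpow Psi (2^k)"
      "X k - Phi = - (F k ** Phi ** mpow Phi (2^k))" "Y k - Psi = - (E k ** Psi ** mpow Psi (2^k))"
      using IK INV_def by blast+
    have sk: "(0 \<le> E k \<and> 0 \<le> F k) \<or> (E k \<le> 0 \<and> F k \<le> 0)" using IK INV_def by blast
    have sk': "(0 \<le> F k \<and> 0 \<le> E k) \<or> (F k \<le> 0 \<and> E k \<le> 0)" using sk by blast
    have M: "invertible (mat 1 - X k ** Y k) \<and> 0 \<le> matrix_inv (mat 1 - X k ** Y k) \<and>
      invertible (mat 1 - Y k ** X k) \<and> 0 \<le> matrix_inv (mat 1 - Y k ** X k)"
      using Minv[OF bk] by blast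
    define V where "V = matrix_inv (mat 1 - X k ** Y k)"
    define W where "W = matrix_inv (mat 1 - Y k ** X k)"
    have V0: "0 \<le> V" and W0: "0 \<le> W" using M V_def W_def by blast+
    have Vk: "V ** (mat 1 - X k ** Y k) = mat 1" using M inv_props V_def by blast
    have Wk: "W ** (mat 1 - Y k ** X k) = mat 1" using M inv_props W_def by blast
    have ES': "E (Suc k) = E k ** W ** E k" using ES W_def by simp
    have FS': "F (Suc k) = F k ** V ** F k" using FS V_def by simp
    have XS': "X (Suc k) = X k + F k ** V ** X k ** E k" using XS V_def by simp
    have YS': "Y (Suc k) = Y k + E k ** W ** Y k ** F k" using YS W_def by simp
    note st1 = sda_step[OF Wk Vk ak(1) ak(3)]
    note st2 = sda_step[OF Vk Wk ak(2) ak(4)]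
    have pw: "mpow Phi (2 ^ Suc k) = mpow Phi (2^k) ** mpow Phi (2^k)"
      "mpow Psi (2 ^ Suc k) = mpow Psi (2^k) ** mpow Psi (2^k)" by (rule mpow_double_pow)+
    have A1: "E (Suc k) = (mat 1 - Y (Suc k) ** Phi) ** mpow Phi (2^Suc k)"
      using st1(1) ES' YS' pw(1) by simp
    have A2: "F (Suc k) = (mat 1 - X (Suc k) ** Psi) ** mpow Psi (2^Suc k)"
      using st2(1) FS' XS' pw(2) by simp
    have A3: "X (Suc k) - Phi = - (F (Suc k) ** Phi ** mpow Phi (2^Suc k))"
      using st1(2) FS' XS' pw(1) by simp
    have A4: "Y (Suc k) - Psi = - (E (Suc k) ** Psi ** mpow Psi (2^Suc k))"
      using st2(2) ES' YS' pw(2) by simp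
    have Enn: "0 \<le> E (Suc k)" unfolding ES' using sk W0 by (intro sq_nonneg_mat) auto
    have Fnn: "0 \<le> F (Suc k)" unfolding FS' using sk V0 by (intro sq_nonneg_mat) auto
    have Xm: "X (Suc k) \<le> X k"
    proof -
      have "F k ** V ** X k ** E k \<le> 0" by (rule sign4[OF V0 bk(2) sk])
      then show ?thesis unfolding XS' by (simp add: add_le_same_cancel1)
    qed
    have Ym: "Y (Suc k) \<le> Y k"
    proof -
      have "E k ** W ** Y k ** F k \<le> 0" by (rule sign4[OF W0 bk(4) sk'])
      then show ?thesis unfolding YS' by (simp add: add_le_same_cancel1)
    qed
    have X0': "X (Suc k) \<le> 0" using Xm bk(2) by (rule order_trans)
    have Y0': "Y (Suc k) \<le> 0" using Ym bk(4) by (rule order_trans)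
    have XP: "Phi \<le> X (Suc k)"
    proof -
      have "X (Suc k) - Phi = F (Suc k) ** (- Phi) ** mpow Phi (2^Suc k)"
        using A3 by (simp add: mm_neg_l mm_neg_r)
      moreover have "0 \<le> F (Suc k) ** (- Phi) ** mpow Phi (2^Suc k)"
        using Fnn Phi0 mpow_even_nonneg[OF Phi0, of k] by (intro mm_nonneg) auto
      ultimately show ?thesis using dn by metis
    qed
    have YP: "Psi \<le> Y (Suc k)"
    proof -
      have "Y (Suc k) - Psi = E (Suc k) ** (- Psi) ** mpow Psi (2^Suc k)"
        using A4 by (simp add: mm_neg_l mm_neg_r)
      moreover have "0 \<le> E (Suc k) ** (- Psi) ** mpow Psi (2^Suc k)"
        using Enn Psi0 mpow_even_nonneg[OF Psi0, of k] by (intro mm_nonneg) auto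
      ultimately show ?thesis using dn by metis
    qed
    show ?thesis unfolding INV_def using A1 A2 A3 A4 Enn Fnn Xm Ym X0' Y0' XP YP by blast
  qed
  have INVall: "INV k" for k
    by (induction k) (use INV0 step in auto)
  have bnd: "Phi \<le> X k" "X k \<le> 0" "Psi \<le> Y k" "Y k \<le> 0" for k using INVall[of k] INV_def by blast+
  have part1: "\<forall>i. invertible (mat 1 - X i ** Y i) \<and> invertible (mat 1 - Y i ** X i)"
    using Minv[OF bnd] by blast
  have part2: "E k = (mat 1 - Y k ** Phi) ** mpow Phi (2^k) \<and> E k \<ge> 0 \<and>
            F k = (mat 1 - X k ** Psi) ** mpow Psi (2^k) \<and> F k \<ge> 0 \<and>
            nonsing_M_matrix (mat 1 - X k ** Y k) \<and> nonsing_M_matrix (mat 1 - Y k ** X k) \<and>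
            Phi \<le> X k \<and> X k \<le> X (k - 1) \<and> X (k - 1) \<le> 0 \<and>
            Psi \<le> Y k \<and> Y k \<le> Y (k - 1) \<and> Y (k - 1) \<le> 0 \<and>
            0 \<le> X k - Phi \<and> X k - Phi \<le> mpow Psi (2^k) ** (- Phi) ** mpow Phi (2^k) \<and>
            0 \<le> Y k - Psi \<and> Y k - Psi \<le> mpow Phi (2^k) ** (- Psi) ** mpow Psi (2^k)"
    if k1: "k \<ge> 1" for k
  proof -
    obtain m where km: "k = Suc m" using k1 by (cases k) auto
    have IK: "INV k" by (rule INVall)
    have ak: "E k = (mat 1 - Y k ** Phi) ** mpow Phi (2^k)" "F k = (mat 1 - X k ** Psi) ** mpow Psi (2^k)"
      "X k - Phi = - (F k ** Phi ** mpow Phi (2^k))" "Y k - Psi = - (E k ** Psi ** mpow Psi (2^k))"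
      using IK INV_def by blast+
    have sm: "(0 \<le> E m \<and> 0 \<le> F m) \<or> (E m \<le> 0 \<and> F m \<le> 0)" using INVall[of m] INV_def by blast
    have Mm: "0 \<le> matrix_inv (mat 1 - X m ** Y m) \<and> 0 \<le> matrix_inv (mat 1 - Y m ** X m)"
      using Minv[OF bnd[of m]] by blast
    have Enn: "0 \<le> E k" unfolding km ES using sm Mm by (intro sq_nonneg_mat) auto
    have Fnn: "0 \<le> F k" unfolding km FS using sm Mm by (intro sq_nonneg_mat) auto
    have mono: "X k \<le> X (k - 1)" "Y k \<le> Y (k - 1)" using step[OF INVall[of m]] km by auto
    have R0: "0 \<le> mpow Phi (2^k)" unfolding km by (rule mpow_even_nonneg[OF Phi0])
    have S0: "0 \<le> mpow Psi (2^k)" unfolding km by (rule mpow_even_nonneg[OF Psi0])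
    have nPhi: "0 \<le> - Phi" and nPsi: "0 \<le> - Psi" using Phi0 Psi0 by auto
    have Q1: "0 \<le> mpow Psi (2^k) ** (- Phi) ** mpow Phi (2^k)"
      using S0 nPhi R0 by (intro mm_nonneg)
    have Q2: "0 \<le> mpow Phi (2^k) ** (- Psi) ** mpow Psi (2^k)"
      using R0 nPsi S0 by (intro mm_nonneg)
    have D1: "X k - Phi = (mat 1 - X k ** Psi) ** (mpow Psi (2^k) ** (- Phi) ** mpow Phi (2^k))"
      using ak(3) ak(2) by (simp add: mm_neg_l mm_neg_r matrix_mul_assoc)
    have D2: "Y k - Psi = (mat 1 - Y k ** Phi) ** (mpow Phi (2^k) ** (- Psi) ** mpow Psi (2^k))"
      using ak(4) ak(1) by (simp add: mm_neg_l mm_neg_r matrix_mul_assoc)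
    have U1: "X k - Phi \<le> mpow Psi (2^k) ** (- Phi) ** mpow Phi (2^k)"
      using final_bound[OF Q1 bnd(2)[of k] Psi0 D1] dn by metis
    have U2: "Y k - Psi \<le> mpow Phi (2^k) ** (- Psi) ** mpow Psi (2^k)"
      using final_bound[OF Q2 bnd(4)[of k] Phi0 D2] dn by metis
    have L1: "0 \<le> X k - Phi" "0 \<le> Y k - Psi" using bnd[of k] dn by blast+
    show ?thesis using ak(1,2) Enn Fnn Minv[OF bnd[of k]] bnd[of k] bnd[of "k - 1"] mono U1 U2 L1 by blast
  qed
  show ?thesis using part1 part2 by blast
qed

end
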